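(* Let $t \ge 1$, $n = t^2$, and let $b_1 < b_2 < \dots < b_t$ be positive integers forming a free $3$-arithmetic-progression sequence. Let $H_s$ be the binary matrix with $n$ columns defined in the context. Then the Tanner graph of $H_s$ has girth $8$, and the binary linear code with parity-check matrix $H_s$ has minimum distance at least $6$.
   Context: A sequence of integers is a free $3$-arithmetic-progression ($3$-AP) sequence if no three distinct elements $x,y,z$ of it satisfy $x + y = 2z$. The matrix $H_s$: set $c_1 = t-1$ and $c_2 = t-1+b_t$. Each column $j \in \{1,\dots,n\}$ is assigned a pair $(a_j, i_j) \in \{1,\dots,t\}\times\{1,\dots,t\}$ such that each value $a \in \{1,\dots,t\}$ equals $a_j$ for exactly $t$ columns, and columns $\ell \neq k$ with $a_\ell = a_k$ have $i_\ell \neq i_k$ (so $j \mapsto (a_j,i_j)$ is a bijection onto $\{1,\dots,t\}^2$). Column $j$ of $H_s$ has exactly three entries equal to $1$, in rows $$ r_{1j} = a_j,\qquad r_{2j} = c_1 + b_{i_j} + r_{1j},\qquad r_{3j} = c_2 + a_j + r_{2j}, $$ and all other entries $0$ (the number of rows is any number at least the largest row index used; rows with no $1$ do not matter). The rows $1,\dots,t$, the rows containing the entries $r_{2j}$, and the rows containing the entries $r_{3j}$ form three disjoint ranges. The Tanner graph of $H_s$ is the bipartite graph with one vertex per row and one per column, a row adjacent to a column iff the corresponding entry is $1$; its girth is the length of its shortest cycle. The code with parity-check matrix $H_s$ is $\{x \in \mathbb{F}_2^n : H_s x = 0\}$, and its minimum distance is the minimum Hamming weight of a nonzero codeword. *)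

theory Defs
  imports Main "HOL-Library.Extended_Nat"
begin

definition free_3AP :: "nat \<Rightarrow> (nat \<Rightarrow> nat) \<Rightarrow> bool" where
  "free_3AP t b \<longleftrightarrow>
     (\<forall>i\<in>{1..t}. \<forall>j\<in>{1..t}. \<forall>k\<in>{1..t}.
        b i \<noteq> b j \<and> b i \<noteq> b k \<and> b j \<noteq> b k \<longrightarrow> b i + b j \<noteq> 2 * b k)"

(* Row indices of the three ones in column j of H_s; column j carries the pair (a j, ii j). *)
definition row1 :: "(nat \<Rightarrow> nat) \<Rightarrow> nat \<Rightarrow> nat" where
  "row1 a j = a j"

definition row2 :: "nat \<Rightarrow> (nat \<Rightarrow> nat) \<Rightarrow> (nat \<Rightarrow> nat) \<Rightarrow> (nat \<Rightarrow> nat) \<Rightarrow> nat \<Rightarrow> nat" where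
  "row2 t b a ii j = (t - 1) + b (ii j) + row1 a j"

definition row3 :: "nat \<Rightarrow> (nat \<Rightarrow> nat) \<Rightarrow> (nat \<Rightarrow> nat) \<Rightarrow> (nat \<Rightarrow> nat) \<Rightarrow> nat \<Rightarrow> nat" where
  "row3 t b a ii j = (t - 1 + b t) + a j + row2 t b a ii j"

definition H_s :: "nat \<Rightarrow> (nat \<Rightarrow> nat) \<Rightarrow> (nat \<Rightarrow> nat) \<Rightarrow> (nat \<Rightarrow> nat) \<Rightarrow> nat \<Rightarrow> nat \<Rightarrow> nat \<Rightarrow> nat" where
  "H_s t b a ii m r j =
     (if r \<in> {1..m} \<and> j \<in> {1..t^2} \<and> r \<in> {row1 a j, row2 t b a ii j, row3 t b a ii j}
      then 1 else 0)"

fun tanner_adj :: "(nat \<Rightarrow> nat \<Rightarrow> nat) \<Rightarrow> nat \<Rightarrow> nat \<Rightarrow> nat + nat \<Rightarrow> nat + nat \<Rightarrow> bool" where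
  "tanner_adj H m n (Inl r) (Inr j) = (r \<in> {1..m} \<and> j \<in> {1..n} \<and> H r j = 1)"
| "tanner_adj H m n (Inr j) (Inl r) = (r \<in> {1..m} \<and> j \<in> {1..n} \<and> H r j = 1)"
| "tanner_adj H m n _ _ = False"

definition is_cycle :: "('v \<Rightarrow> 'v \<Rightarrow> bool) \<Rightarrow> 'v list \<Rightarrow> bool" where
  "is_cycle adj vs \<longleftrightarrow> length vs \<ge> 3 \<and> distinct vs \<and>
     (\<forall>k < length vs. adj (vs ! k) (vs ! ((k + 1) mod length vs)))"

(* Girth: length of a shortest cycle (infinity if there is no cycle). *)
definition girth :: "('v \<Rightarrow> 'v \<Rightarrow> bool) \<Rightarrow> enat" where
  "girth adj = Inf {enat (length vs) | vs. is_cycle adj vs}"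

definition code :: "(nat \<Rightarrow> nat \<Rightarrow> nat) \<Rightarrow> nat \<Rightarrow> nat \<Rightarrow> (nat \<Rightarrow> nat) set" where
  "code H m n = {x. (\<forall>j\<in>{1..n}. x j \<in> {0, 1}) \<and> (\<forall>j. j \<notin> {1..n} \<longrightarrow> x j = 0) \<and>
                    (\<forall>r\<in>{1..m}. even (\<Sum>j=1..n. H r j * x j))}"

definition hamming_weight :: "nat \<Rightarrow> (nat \<Rightarrow> nat) \<Rightarrow> nat" where
  "hamming_weight n x = card {j\<in>{1..n}. x j \<noteq> 0}"

(* Minimum distance: minimum weight of a nonzero codeword (infinity if none). *)
definition min_distance :: "(nat \<Rightarrow> nat \<Rightarrow> nat) \<Rightarrow> nat \<Rightarrow> nat \<Rightarrow> enat" where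
  "min_distance H m n =
     Inf {enat (hamming_weight n x) | x. x \<in> code H m n \<and> (\<exists>j\<in>{1..n}. x j \<noteq> 0)}"

end

theory Submission
  imports Defs
begin

definition Rw :: "nat \<Rightarrow> (nat \<Rightarrow> nat) \<Rightarrow> (nat \<Rightarrow> nat) \<Rightarrow> (nat \<Rightarrow> nat) \<Rightarrow> nat \<Rightarrow> nat set" where
  "Rw t b a ii j = {row1 a j, row2 t b a ii j, row3 t b a ii j}"

lemma cyc3: assumes A: "\<forall>k<length vs. G (vs!k) (vs!((k+1) mod length vs))" and D: "distinct vs" and L: "length vs = 3"
  shows "G (vs!0) (vs!1) \<and> G (vs!1) (vs!2) \<and> G (vs!2) (vs!0) \<and> distinct [vs!0, vs!1, vs!2]"
proof -
  have a0: "G (vs!0) (vs!1)" using spec[OF A, of 0] L by simp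
  have a1: "G (vs!1) (vs!2)" using spec[OF A, of 1] L by (simp add: numeral_2_eq_2)
  have a2: "G (vs!2) (vs!0)" using spec[OF A, of 2] L by simp
  have dd: "distinct [vs!0, vs!1, vs!2]" using D L by (simp add: nth_eq_iff_index_eq)
  show ?thesis using a0 a1 a2 dd by blast
qed

lemma cyc4: assumes A: "\<forall>k<length vs. G (vs!k) (vs!((k+1) mod length vs))" and D: "distinct vs" and L: "length vs = 4"
  shows "G (vs!0) (vs!1) \<and> G (vs!1) (vs!2) \<and> G (vs!2) (vs!3) \<and> G (vs!3) (vs!0) \<and> distinct [vs!0, vs!1, vs!2, vs!3]"
proof -
  have a0: "G (vs!0) (vs!1)" using spec[OF A, of 0] L by simp
  have a1: "G (vs!1) (vs!2)" using spec[OF A, of 1] L by (simp add: numeral_2_eq_2)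
  have a2: "G (vs!2) (vs!3)" using spec[OF A, of 2] L by simp
  have a3: "G (vs!3) (vs!0)" using spec[OF A, of 3] L by simp
  have dd: "distinct [vs!0, vs!1, vs!2, vs!3]" using D L by (simp add: nth_eq_iff_index_eq)
  show ?thesis using a0 a1 a2 a3 dd by blast
qed

lemma cyc5: assumes A: "\<forall>k<length vs. G (vs!k) (vs!((k+1) mod length vs))" and D: "distinct vs" and L: "length vs = 5"
  shows "G (vs!0) (vs!1) \<and> G (vs!1) (vs!2) \<and> G (vs!2) (vs!3) \<and> G (vs!3) (vs!4) \<and> G (vs!4) (vs!0) \<and> distinct [vs!0, vs!1, vs!2, vs!3, vs!4]"
proof -
  have a0: "G (vs!0) (vs!1)" using spec[OF A, of 0] L by simp
  have a1: "G (vs!1) (vs!2)" using spec[OF A, of 1] L by (simp add: numeral_2_eq_2)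
  have a2: "G (vs!2) (vs!3)" using spec[OF A, of 2] L by simp
  have a3: "G (vs!3) (vs!4)" using spec[OF A, of 3] L by simp
  have a4: "G (vs!4) (vs!0)" using spec[OF A, of 4] L by simp
  have dd: "distinct [vs!0, vs!1, vs!2, vs!3, vs!4]" using D L by (simp add: nth_eq_iff_index_eq)
  show ?thesis using a0 a1 a2 a3 a4 dd by blast
qed

lemma cyc6: assumes A: "\<forall>k<length vs. G (vs!k) (vs!((k+1) mod length vs))" and D: "distinct vs" and L: "length vs = 6"
  shows "G (vs!0) (vs!1) \<and> G (vs!1) (vs!2) \<and> G (vs!2) (vs!3) \<and> G (vs!3) (vs!4) \<and> G (vs!4) (vs!5) \<and> G (vs!5) (vs!0) \<and> distinct [vs!0, vs!1, vs!2, vs!3, vs!4, vs!5]"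
proof -
  have a0: "G (vs!0) (vs!1)" using spec[OF A, of 0] L by simp
  have a1: "G (vs!1) (vs!2)" using spec[OF A, of 1] L by (simp add: numeral_2_eq_2)
  have a2: "G (vs!2) (vs!3)" using spec[OF A, of 2] L by simp
  have a3: "G (vs!3) (vs!4)" using spec[OF A, of 3] L by simp
  have a4: "G (vs!4) (vs!5)" using spec[OF A, of 4] L by simp
  have a5: "G (vs!5) (vs!0)" using spec[OF A, of 5] L by simp
  have dd: "distinct [vs!0, vs!1, vs!2, vs!3, vs!4, vs!5]" using D L by (simp add: nth_eq_iff_index_eq)
  show ?thesis using a0 a1 a2 a3 a4 a5 dd by blast
qed

lemma cyc7: assumes A: "\<forall>k<length vs. G (vs!k) (vs!((k+1) mod length vs))" and D: "distinct vs" and L: "length vs = 7"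
  shows "G (vs!0) (vs!1) \<and> G (vs!1) (vs!2) \<and> G (vs!2) (vs!3) \<and> G (vs!3) (vs!4) \<and> G (vs!4) (vs!5) \<and> G (vs!5) (vs!6) \<and> G (vs!6) (vs!0) \<and> distinct [vs!0, vs!1, vs!2, vs!3, vs!4, vs!5, vs!6]"
proof -
  have a0: "G (vs!0) (vs!1)" using spec[OF A, of 0] L by simp
  have a1: "G (vs!1) (vs!2)" using spec[OF A, of 1] L by (simp add: numeral_2_eq_2)
  have a2: "G (vs!2) (vs!3)" using spec[OF A, of 2] L by simp
  have a3: "G (vs!3) (vs!4)" using spec[OF A, of 3] L by simp
  have a4: "G (vs!4) (vs!5)" using spec[OF A, of 4] L by simp
  have a5: "G (vs!5) (vs!6)" using spec[OF A, of 5] L by simp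
  have a6: "G (vs!6) (vs!0)" using spec[OF A, of 6] L by simp
  have dd: "distinct [vs!0, vs!1, vs!2, vs!3, vs!4, vs!5, vs!6]" using D L by (simp add: nth_eq_iff_index_eq)
  show ?thesis using a0 a1 a2 a3 a4 a5 a6 dd by blast
qed

lemma card_filter_sum: "finite A \<Longrightarrow> card {x\<in>A. P x} = (\<Sum>x\<in>A. if P x then 1 else (0::nat))"
  using sum.inter_filter[of A "\<lambda>_. 1::nat" P] by simp

context
  fixes t m :: nat and b a ii :: "nat \<Rightarrow> nat"
  assumes t1: "t \<ge> 1"
    and mono: "strict_mono_on {1..t} b"
    and pos: "\<forall>i\<in>{1..t}. b i > 0"
    and free: "free_3AP t b"
    and bij: "bij_betw (\<lambda>j. (a j, ii j)) {1..t^2} ({1..t} \<times> {1..t})"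
    and rm: "\<forall>j\<in>{1..t^2}. row3 t b a ii j \<le> m"
begin

lemma col_in: "j \<in> {1..t^2} \<Longrightarrow> a j \<in> {1..t} \<and> ii j \<in> {1..t}"
  using bij_betw_apply[OF bij, of j] by auto

lemma col_inj:
  assumes j: "j \<in> {1..t^2}" and k: "k \<in> {1..t^2}" and e1: "a j = a k" and e2: "b (ii j) = b (ii k)"
  shows "j = k"
proof -
  have "ii j = ii k" using strict_mono_on_eqD[OF mono e2] col_in j k by auto
  then show "j = k" using bij j k e1 unfolding bij_betw_def inj_on_def by auto
qed

lemma bnd:
  assumes "j \<in> {1..t^2}"
  shows "1 \<le> a j" "a j \<le> t" "1 \<le> b (ii j)" "b (ii j) \<le> b t"
proof -
  show "1 \<le> a j" "a j \<le> t" using col_in[OF assms] by auto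
  have "ii j \<in> {1..t}" using col_in[OF assms] by auto
  then have "b (ii j) > 0" using pos by blast
  then show "1 \<le> b (ii j)" by simp
  show "b (ii j) \<le> b t" using col_in[OF assms] t1 by (auto intro!: strict_mono_on_leD[OF mono])
qed

lemma r12: "j \<in> {1..t^2} \<Longrightarrow> k \<in> {1..t^2} \<Longrightarrow> row1 a j \<noteq> row2 t b a ii k"
  using bnd[of j] bnd[of k] by (simp add: row1_def row2_def)
lemma r13: "j \<in> {1..t^2} \<Longrightarrow> k \<in> {1..t^2} \<Longrightarrow> row1 a j \<noteq> row3 t b a ii k"
  using bnd[of j] bnd[of k] by (simp add: row1_def row2_def row3_def)
lemma r23: "j \<in> {1..t^2} \<Longrightarrow> k \<in> {1..t^2} \<Longrightarrow> row2 t b a ii j \<noteq> row3 t b a ii k"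
  using bnd[of j] bnd[of k] by (simp add: row1_def row2_def row3_def)

lemma shared:
  assumes "j \<in> {1..t^2}" "k \<in> {1..t^2}" "x \<in> Rw t b a ii j" "x \<in> Rw t b a ii k"
  shows "(x = row1 a j \<and> x = row1 a k) \<or> (x = row2 t b a ii j \<and> x = row2 t b a ii k)
     \<or> (x = row3 t b a ii j \<and> x = row3 t b a ii k)"
  using assms r12[of j k] r12[of k j] r13[of j k] r13[of k j] r23[of j k] r23[of k j]
  unfolding Rw_def by auto

lemma P1:
  assumes "j \<in> {1..t^2}" "k \<in> {1..t^2}" "j \<noteq> k" "x \<noteq> y"
    "x \<in> Rw t b a ii j" "x \<in> Rw t b a ii k" "y \<in> Rw t b a ii j" "y \<in> Rw t b a ii k"
  shows False
proof -
  have A: "a j \<noteq> a k \<or> b (ii j) \<noteq> b (ii k)" using col_inj assms by blast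
  show False using shared[OF assms(1,2,5,6)] shared[OF assms(1,2,7,8)] A assms(4)
    by (auto simp: row1_def row2_def row3_def)
qed

lemma key:
  assumes p: "p \<in> {1..t^2}" and q: "q \<in> {1..t^2}" and r: "r \<in> {1..t^2}" and "q \<noteq> r"
    and e1: "row1 a p = row1 a q" and e2: "row2 t b a ii q = row2 t b a ii r"
    and e3: "row3 t b a ii r = row3 t b a ii p"
  shows False
proof -
  have E1: "a p = a q" using e1 by (simp add: row1_def)
  have E2: "b (ii q) + a q = b (ii r) + a r" using e2 by (simp add: row2_def row1_def)
  have E3: "2 * a r + b (ii r) = 2 * a p + b (ii p)" using e3 e2 by (simp add: row3_def row2_def row1_def)
  have ne: "b (ii q) \<noteq> b (ii r)" using col_inj[OF q r] E2 \<open>q \<noteq> r\<close> by auto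
  have ap: "b (ii p) + b (ii r) = 2 * b (ii q)" using E1 E2 E3 by linarith
  have d: "b (ii p) \<noteq> b (ii r) \<and> b (ii p) \<noteq> b (ii q)" using ap ne by linarith
  show False using free col_in[OF p] col_in[OF q] col_in[OF r] ap ne d
    unfolding free_3AP_def by (metis (no_types, lifting))
qed

lemma P2:
  assumes j: "j \<in> {1..t^2}" and k: "k \<in> {1..t^2}" and l: "l \<in> {1..t^2}"
    and "j \<noteq> k" "k \<noteq> l" "j \<noteq> l" "x \<noteq> y" "y \<noteq> z" "x \<noteq> z"
    and "x \<in> Rw t b a ii j" "x \<in> Rw t b a ii k"
    and "y \<in> Rw t b a ii k" "y \<in> Rw t b a ii l"
    and "z \<in> Rw t b a ii l" "z \<in> Rw t b a ii j"
  shows False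
  using shared[OF j k, of x] shared[OF k l, of y] shared[OF l j, of z] assms
    key[OF j k l] key[OF k j l] key[OF j l k] key[OF l j k] key[OF k l j] key[OF l k j]
  by metis


lemma rowpos: "j \<in> {1..t^2} \<Longrightarrow> r \<in> Rw t b a ii j \<Longrightarrow> r \<in> {1..m}"
proof -
  assume j: "j \<in> {1..t^2}" and r: "r \<in> Rw t b a ii j"
  have "row3 t b a ii j \<le> m" using rm j by blast
  then show ?thesis using bnd[OF j] r unfolding Rw_def row1_def row2_def row3_def by auto
qed

lemma Hs1: "H_s t b a ii m r j = 1 \<longleftrightarrow> r \<in> {1..m} \<and> j \<in> {1..t^2} \<and> r \<in> Rw t b a ii j"
  unfolding H_s_def Rw_def by simp

lemma adjc:
  "tanner_adj (H_s t b a ii m) m (t^2) (Inl r) (Inr j) \<longleftrightarrow> j \<in> {1..t^2} \<and> r \<in> Rw t b a ii j"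
  "tanner_adj (H_s t b a ii m) m (t^2) (Inr j) (Inl r) \<longleftrightarrow> j \<in> {1..t^2} \<and> r \<in> Rw t b a ii j"
  by (simp only: tanner_adj.simps Hs1; use rowpos in blast)+

abbreviation "GG \<equiv> tanner_adj (H_s t b a ii m) m (t^2)"

lemma adjF: "\<not> GG (Inl r) (Inl r')" "\<not> GG (Inr j) (Inr j')" by simp_all

lemmas AS = adjc adjF

lemma adjL: "GG (Inl r) v \<Longrightarrow> \<exists>j. v = Inr j \<and> j \<in> {1..t^2} \<and> r \<in> Rw t b a ii j"
  by (cases v) (auto simp del: tanner_adj.simps simp add: AS)

lemma adjR: "GG (Inr j) v \<Longrightarrow> \<exists>r. v = Inl r \<and> j \<in> {1..t^2} \<and> r \<in> Rw t b a ii j"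
  by (cases v) (auto simp del: tanner_adj.simps simp add: AS)

lemma adj_isl: "GG u v \<Longrightarrow> isl u \<noteq> isl v"
  by (cases u; cases v) (auto simp del: tanner_adj.simps simp add: AS)

lemma c4':
  assumes "v0 = Inl r0" "GG v0 v1" "GG v1 v2" "GG v2 v3" "GG v3 v0" "distinct [v0,v1,v2,v3]"
  shows False
proof -
  obtain j1 where 1: "v1 = Inr j1" "j1 \<in> {1..t^2}" "r0 \<in> Rw t b a ii j1" using adjL assms by metis
  obtain r2 where 2: "v2 = Inl r2" "r2 \<in> Rw t b a ii j1" using adjR assms 1 by metis
  obtain j3 where 3: "v3 = Inr j3" "j3 \<in> {1..t^2}" "r2 \<in> Rw t b a ii j3" using adjL assms 2 by metis
  have 4: "r0 \<in> Rw t b a ii j3" using assms(1,5) 3(1) adjc(2) by metis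
  show False using P1[OF 1(2) 3(2) _ _ 1(3) 4 2(2) 3(3)] assms(1,6) 1 2 3 by auto
qed

lemma c4: assumes "GG v0 v1" "GG v1 v2" "GG v2 v3" "GG v3 v0" "distinct [v0,v1,v2,v3]"
  shows False
proof (cases v0)
  case (Inl r0) then show False using c4' assms by blast
next
  case (Inr j0)
  then obtain r1 where "v1 = Inl r1" using adjR assms by metis
  then show False using c4'[of v1 r1 v2 v3 v0] assms by auto
qed

lemma c6':
  assumes "v0 = Inl r0" "GG v0 v1" "GG v1 v2" "GG v2 v3" "GG v3 v4" "GG v4 v5" "GG v5 v0"
    "distinct [v0,v1,v2,v3,v4,v5]"
  shows False
proof -
  obtain j1 where 1: "v1 = Inr j1" "j1 \<in> {1..t^2}" "r0 \<in> Rw t b a ii j1" using adjL assms by metis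
  obtain r2 where 2: "v2 = Inl r2" "r2 \<in> Rw t b a ii j1" using adjR assms 1 by metis
  obtain j3 where 3: "v3 = Inr j3" "j3 \<in> {1..t^2}" "r2 \<in> Rw t b a ii j3" using adjL assms 2 by metis
  obtain r4 where 4: "v4 = Inl r4" "r4 \<in> Rw t b a ii j3" using adjR assms 3 by metis
  obtain j5 where 5: "v5 = Inr j5" "j5 \<in> {1..t^2}" "r4 \<in> Rw t b a ii j5" using adjL assms 4 by metis
  have 6: "r0 \<in> Rw t b a ii j5" using assms(1,7) 5(1) adjc(2) by metis
  show False using P2[OF 1(2) 3(2) 5(2) _ _ _ _ _ _ 2(2) 3(3) 4(2) 5(3) 6 1(3)] assms(1,8) 1 2 3 4 5
    by auto
qed

lemma c6: assumes "GG v0 v1" "GG v1 v2" "GG v2 v3" "GG v3 v4" "GG v4 v5" "GG v5 v0"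
    "distinct [v0,v1,v2,v3,v4,v5]"
  shows False
proof (cases v0)
  case (Inl r0) then show False using c6' assms by blast
next
  case (Inr j0)
  then obtain r1 where "v1 = Inl r1" using adjR assms by metis
  then show False using c6'[of v1 r1 v2 v3 v4 v5 v0] assms by auto
qed

lemma adj2: "GG u v \<Longrightarrow> GG v w \<Longrightarrow> isl u = isl w"
  by (cases u; cases v; cases w) (auto simp del: tanner_adj.simps simp add: AS)

lemma c3: "GG v0 v1 \<Longrightarrow> GG v1 v2 \<Longrightarrow> GG v2 v0 \<Longrightarrow> False"
  using adj2[of v0 v1 v2] adj_isl[of v2 v0] by simp

lemma c5: "GG v0 v1 \<Longrightarrow> GG v1 v2 \<Longrightarrow> GG v2 v3 \<Longrightarrow> GG v3 v4 \<Longrightarrow> GG v4 v0 \<Longrightarrow> False"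
  using adj2[of v0 v1 v2] adj2[of v2 v3 v4] adj_isl[of v4 v0] by simp

lemma c7: "GG v0 v1 \<Longrightarrow> GG v1 v2 \<Longrightarrow> GG v2 v3 \<Longrightarrow> GG v3 v4 \<Longrightarrow> GG v4 v5 \<Longrightarrow> GG v5 v6
  \<Longrightarrow> GG v6 v0 \<Longrightarrow> False"
  using adj2[of v0 v1 v2] adj2[of v2 v3 v4] adj2[of v4 v5 v6] adj_isl[of v6 v0] by simp

lemma cyc: assumes c: "is_cycle GG vs" shows "8 \<le> length vs"
proof (rule ccontr)
  assume n: "\<not> 8 \<le> length vs"
  from c have L3: "3 \<le> length vs" and d: "distinct vs"
    and A: "\<forall>k<length vs. GG (vs!k) (vs!((k+1) mod length vs))" by (auto simp: is_cycle_def)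
  have "length vs \<in> {3,4,5,6,7}" using L3 n by auto
  then consider "length vs = 3" | "length vs = 4" | "length vs = 5" | "length vs = 6" | "length vs = 7"
    by auto
  then show False
  proof cases
    case 1
    show False using cyc3[OF A d 1] c3 by blast
  next
    case 2
    show False using cyc4[OF A d 2] c4 by blast
  next
    case 3
    show False using cyc5[OF A d 3] c5 by blast
  next
    case 4
    show False using cyc6[OF A d 4] c6 by blast
  next
    case 5
    show False using cyc7[OF A d 5] c7 by blast
  qed
qed

lemma card3: "j \<in> {1..t^2} \<Longrightarrow> card (Rw t b a ii j) = 3"
  using r12[of j j] r13[of j j] r23[of j j] by (simp add: Rw_def)

lemma rowsin: "row1 a j \<in> Rw t b a ii j" "row2 t b a ii j \<in> Rw t b a ii j" "row3 t b a ii j \<in> Rw t b a ii j"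
  by (simp_all add: Rw_def)

lemma dist6:
  assumes x: "x \<in> code (H_s t b a ii m) m (t^2)" and nz: "\<exists>j\<in>{1..t^2}. x j \<noteq> 0"
  shows "6 \<le> hamming_weight (t^2) x"
proof -
  define S where "S = {j\<in>{1..t^2}. x j \<noteq> 0}"
  have fS: "finite S" and SC: "S \<subseteq> {1..t^2}" by (auto simp: S_def)
  have x01: "\<forall>j\<in>{1..t^2}. x j \<in> {0,1}"
    and rows: "\<forall>r\<in>{1..m}. even (\<Sum>j=1..t^2. H_s t b a ii m r j * x j)"
    using x by (auto simp: code_def)
  have cnt: "(\<Sum>j=1..t^2. H_s t b a ii m r j * x j) = card {j\<in>S. r \<in> Rw t b a ii j}"
    if r: "r \<in> {1..m}" for r
  proof -
    have "(\<Sum>j=1..t^2. H_s t b a ii m r j * x j)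
        = (\<Sum>j=1..t^2. if j \<in> S \<and> r \<in> Rw t b a ii j then 1 else 0)"
    proof (rule sum.cong)
      fix j assume j: "j \<in> {1..t^2}"
      show "H_s t b a ii m r j * x j = (if j \<in> S \<and> r \<in> Rw t b a ii j then 1 else 0)"
      proof -
        have "x j = 0 \<or> x j = 1" using x01 j by blast
        then show ?thesis
        proof
          assume "x j = 0" then show ?thesis by (simp add: S_def)
        next
          assume x1: "x j = 1"
          have "H_s t b a ii m r j = (if r \<in> Rw t b a ii j then 1 else 0)"
            using j r unfolding H_s_def Rw_def by simp
          then show ?thesis using x1 j by (simp add: S_def)
        qed
      qed
    qed simp
    also have "\<dots> = card {j\<in>{1..t^2}. j \<in> S \<and> r \<in> Rw t b a ii j}"
      by (rule card_filter_sum[symmetric]) simp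
    also have "{j\<in>{1..t^2}. j \<in> S \<and> r \<in> Rw t b a ii j} = {j\<in>S. r \<in> Rw t b a ii j}"
      using SC by auto
    finally show ?thesis .
  qed
  have ev: "even (card {j\<in>S. r \<in> Rw t b a ii j})" for r
  proof (cases "r \<in> {1..m}")
    case True then show ?thesis using rows cnt by auto
  next
    case False
    then have "{j\<in>S. r \<in> Rw t b a ii j} = {}" using rowpos SC by blast
    then show ?thesis by (metis card.empty dvd_0_right)
  qed
  have sh: "\<exists>k\<in>S. k \<noteq> j \<and> r \<in> Rw t b a ii k" if j: "j \<in> S" and r: "r \<in> Rw t b a ii j" for j r
  proof (rule ccontr)
    assume "\<not> ?thesis"
    then have "{j\<in>S. r \<in> Rw t b a ii j} = {j}" using j r by auto
    then show False using ev[of r] by simp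
  qed
  define U where "U = \<Union> (Rw t b a ii ` S)"
  have fU: "finite U" unfolding U_def using fS by (auto simp: Rw_def)
  have "(\<Sum>r\<in>U. card {j\<in>S. r \<in> Rw t b a ii j}) = (\<Sum>r\<in>U. \<Sum>j\<in>S. if r \<in> Rw t b a ii j then 1 else 0)"
    using card_filter_sum[OF fS] by simp
  also have "\<dots> = (\<Sum>j\<in>S. \<Sum>r\<in>U. if r \<in> Rw t b a ii j then 1 else 0)"
    by (rule sum.swap)
  also have "\<dots> = (\<Sum>j\<in>S. 3)"
  proof (rule sum.cong)
    fix j assume j: "j \<in> S"
    have "(\<Sum>r\<in>U. if r \<in> Rw t b a ii j then 1 else 0) = card {r\<in>U. r \<in> Rw t b a ii j}"
      by (rule card_filter_sum[OF fU, symmetric])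
    also have "{r\<in>U. r \<in> Rw t b a ii j} = Rw t b a ii j" using j unfolding U_def by auto
    also have "card (Rw t b a ii j) = 3" using card3 j SC by auto
    finally show "(\<Sum>r\<in>U. if r \<in> Rw t b a ii j then 1 else 0) = (3::nat)" .
  qed simp
  finally have "(\<Sum>r\<in>U. card {j\<in>S. r \<in> Rw t b a ii j}) = 3 * card S" by simp
  moreover have "even (\<Sum>r\<in>U. card {j\<in>S. r \<in> Rw t b a ii j})" by (rule dvd_sum) (use ev in auto)
  ultimately have evS: "even (card S)" by simp
  have ne: "S \<noteq> {}" using nz by (auto simp: S_def)
  then have cpos: "card S > 0" using fS by auto
  have hw: "hamming_weight (t^2) x = card S" by (simp add: hamming_weight_def S_def)
  have thr: "\<exists>k1 k2. k1 \<in> S \<and> k2 \<in> S \<and> k1 \<noteq> j \<and> k2 \<noteq> j \<and> k1 \<noteq> k2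
      \<and> row1 a j \<in> Rw t b a ii k1 \<and> row2 t b a ii j \<in> Rw t b a ii k2" if j: "j \<in> S" for j
  proof -
    have jC: "j \<in> {1..t^2}" using j SC by auto
    obtain k1 where k1: "k1 \<in> S" "k1 \<noteq> j" "row1 a j \<in> Rw t b a ii k1" using sh[OF j rowsin(1)] by blast
    obtain k2 where k2: "k2 \<in> S" "k2 \<noteq> j" "row2 t b a ii j \<in> Rw t b a ii k2" using sh[OF j rowsin(2)] by blast
    have "k1 \<noteq> k2"
    proof
      assume "k1 = k2"
      then show False using P1[OF jC, of k1 "row1 a j" "row2 t b a ii j"] k1 k2 SC r12[OF jC jC] rowsin
        by auto
    qed
    then show ?thesis using k1 k2 by blast
  qed
  show ?thesis
  proof (rule ccontr)
    assume "\<not> ?thesis"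
    then have "card S < 6" using hw by simp
    then have "card S = 2 \<or> card S = 4" using evS cpos by presburger
    then show False
    proof
      assume c2: "card S = 2"
      then obtain j k where S: "S = {j,k}" "j \<noteq> k" by (meson card_2_iff)
      have jS: "j \<in> S" using S by auto
      have jC: "j \<in> {1..t^2}" and kC: "k \<in> {1..t^2}" using S SC by auto
      obtain k1 k2 where kk: "k1 \<in> S" "k2 \<in> S" "k1 \<noteq> j" "k2 \<noteq> j" "k1 \<noteq> k2" using thr[OF jS] by blast
      then show False using S by auto
    next
      assume c4: "card S = 4"
      obtain j where jS: "j \<in> S" using ne by blast
      have jC: "j \<in> {1..t^2}" using jS SC by auto
      have ALL: "\<exists>r. r \<in> Rw t b a ii p \<and> r \<in> Rw t b a ii q" if p: "p \<in> S" and q: "q \<in> S" "q \<noteq> p" for p q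
      proof -
        have pC: "p \<in> {1..t^2}" using p SC by auto
        obtain k1 where k1: "k1 \<in> S" "k1 \<noteq> p" "row1 a p \<in> Rw t b a ii k1" using sh[OF p rowsin(1)] by blast
        obtain k2 where k2: "k2 \<in> S" "k2 \<noteq> p" "row2 t b a ii p \<in> Rw t b a ii k2" using sh[OF p rowsin(2)] by blast
        obtain k3 where k3: "k3 \<in> S" "k3 \<noteq> p" "row3 t b a ii p \<in> Rw t b a ii k3" using sh[OF p rowsin(3)] by blast
        have k1C: "k1 \<in> {1..t^2}" and k2C: "k2 \<in> {1..t^2}" using k1 k2 SC by auto
        have d12: "k1 \<noteq> k2"
        proof
          assume "k1 = k2"
          then show False using P1[OF pC k1C k1(2)[symmetric] r12[OF pC pC] rowsin(1) k1(3) rowsin(2)] k2 by auto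
        qed
        have d13: "k1 \<noteq> k3"
        proof
          assume "k1 = k3"
          then show False using P1[OF pC k1C k1(2)[symmetric] r13[OF pC pC] rowsin(1) k1(3) rowsin(3)] k3 by auto
        qed
        have d23: "k2 \<noteq> k3"
        proof
          assume "k2 = k3"
          then show False using P1[OF pC k2C k2(2)[symmetric] r23[OF pC pC] rowsin(2) k2(3) rowsin(3)] k3 by auto
        qed
        have sub: "{k1,k2,k3} \<subseteq> S - {p}" using k1 k2 k3 by auto
        have "card {k1,k2,k3} = 3" using d12 d13 d23 by simp
        moreover have "card (S - {p}) = 3" using c4 p fS by simp
        ultimately have "{k1,k2,k3} = S - {p}" using sub fS by (metis card_subset_eq finite_Diff)
        then have "q \<in> {k1,k2,k3}" using q by auto
        then show ?thesis using k1 k2 k3 rowsin by blast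
      qed
      obtain k1 k2 where kk: "k1 \<in> S" "k2 \<in> S" "k1 \<noteq> j" "k2 \<noteq> j" "k1 \<noteq> k2"
        "row1 a j \<in> Rw t b a ii k1" "row2 t b a ii j \<in> Rw t b a ii k2" using thr[OF jS] by blast
      have k1C: "k1 \<in> {1..t^2}" and k2C: "k2 \<in> {1..t^2}" using kk SC by auto
      obtain y where y: "y \<in> Rw t b a ii k1" "y \<in> Rw t b a ii k2" using ALL[OF kk(1) kk(2) kk(5)[symmetric]] by blast
      have y1: "y \<noteq> row1 a j"
      proof
        assume "y = row1 a j"
        then show False using P1[OF jC k2C kk(4)[symmetric] r12[OF jC jC] rowsin(1) _ rowsin(2) kk(7)] y by auto
      qed
      have y2: "y \<noteq> row2 t b a ii j"
      proof
        assume "y = row2 t b a ii j"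
        then show False using P1[OF jC k1C kk(3)[symmetric] r12[OF jC jC] rowsin(1) kk(6) rowsin(2)] y by auto
      qed
      show False using P2[OF jC k1C k2C kk(3)[symmetric] kk(5) kk(4)[symmetric] y1[symmetric] _ r12[OF jC jC]
          rowsin(1) kk(6) y kk(7) rowsin(2)] y2 by auto
    qed
  qed
qed

end

theorem proposition3:
  fixes t m :: nat and b a ii :: "nat \<Rightarrow> nat"
  assumes "t \<ge> 1"
    and "strict_mono_on {1..t} b"
    and "\<forall>i\<in>{1..t}. b i > 0"
    and "free_3AP t b"
    and "bij_betw (\<lambda>j. (a j, ii j)) {1..t^2} ({1..t} \<times> {1..t})"
    and "\<forall>j\<in>{1..t^2}. row3 t b a ii j \<le> m"
  shows "girth (tanner_adj (H_s t b a ii m) m (t^2)) \<ge> 8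
         \<and> min_distance (H_s t b a ii m) m (t^2) \<ge> 6"
proof
  show "girth (tanner_adj (H_s t b a ii m) m (t^2)) \<ge> 8"
    unfolding girth_def
  proof (rule Inf_greatest)
    fix e assume "e \<in> {enat (length vs) |vs. is_cycle (tanner_adj (H_s t b a ii m) m (t^2)) vs}"
    then obtain vs where e: "e = enat (length vs)" and c: "is_cycle (tanner_adj (H_s t b a ii m) m (t^2)) vs"
      by blast
    have "8 \<le> length vs" by (rule cyc[OF assms c])
    then show "8 \<le> e" using e by (simp add: numeral_eq_enat)
  qed
  show "min_distance (H_s t b a ii m) m (t^2) \<ge> 6"
    unfolding min_distance_def
  proof (rule Inf_greatest)
    fix e assume "e \<in> {enat (hamming_weight (t^2) x) |x. x \<in> code (H_s t b a ii m) m (t^2) \<and> (\<exists>j\<in>{1..t^2}. x j \<noteq> 0)}"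
    then obtain x where e: "e = enat (hamming_weight (t^2) x)" and c: "x \<in> code (H_s t b a ii m) m (t^2)"
      and nz: "\<exists>j\<in>{1..t^2}. x j \<noteq> 0"
      by blast
    have "6 \<le> hamming_weight (t^2) x" by (rule dist6[OF assms c nz])
    then show "6 \<le> e" using e by (simp add: numeral_eq_enat)
  qed
qed

end
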